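(* Let $a\in(0,1)$, $r\ge1$, $\theta\in\mathcal{D}_{a,r}$ and $X\sim N(\theta^*,\sigma^2I_d)$. Then $$\mathbb{E}\,\omega\Big(\frac{\langle\theta,X\rangle}{\sigma^2}\Big)>1-e^{-(as/r)^2/5}.$$
   Context: Fix $d\ge1$, $\sigma>0$ and $\theta^*\in\mathbb{R}^d\setminus\{0\}$. Let $\omega(t):=1/(1+e^{-2t})$ and $s:=\|\theta^*\|/\sigma$. For $a\in(0,1)$ and $r\ge1$ define $\mathcal{H}_a:=\{\theta:\langle\theta,\theta^*\rangle\ge a\|\theta^*\|^2\}$, $\mathcal{B}_r:=\{\theta:\|\theta\|\le r\|\theta^*\|\}$ and $\mathcal{D}_{a,r}:=\mathcal{H}_a\cap\mathcal{B}_r$. *)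

theory Defs
  imports "HOL-Probability.Probability"
begin

definition omega :: "real \<Rightarrow> real" where
  "omega t = 1 / (1 + exp (-2 * t))"

definition iso_gaussian_density :: "'a::euclidean_space \<Rightarrow> real \<Rightarrow> 'a \<Rightarrow> real" where
  "iso_gaussian_density mu sg x =
     exp (- (norm (x - mu))\<^sup>2 / (2 * sg\<^sup>2)) / (sqrt (2 * pi * sg\<^sup>2)) ^ DIM('a)"

definition halfspace_H :: "real \<Rightarrow> 'a::real_inner \<Rightarrow> 'a set" where
  "halfspace_H a thstar = {th. inner th thstar \<ge> a * (norm thstar)\<^sup>2}"

definition ball_B :: "real \<Rightarrow> 'a::real_normed_vector \<Rightarrow> 'a set" where
  "ball_B r thstar = {th. norm th \<le> r * norm thstar}"

definition region_D :: "real \<Rightarrow> real \<Rightarrow> 'a::real_inner \<Rightarrow> 'a set" where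
  "region_D a r thstar = halfspace_H a thstar \<inter> ball_B r thstar"

end

theory Submission imports Defs begin

lemma omega_lb:
  fixes y l :: real assumes "0 \<le> l" "l \<le> 2"
  shows "1 - exp (- l * y) \<le> omega y"
proof -
  have e: "1 - omega y = 1 / (1 + exp (2*y))"
  proof -
    have p: "0 < 1 + exp (2*y)" by (simp add: add_pos_pos)
    have q: "exp (-2*y) = 1 / exp (2*y)" by (simp add: exp_minus inverse_eq_divide)
    show ?thesis unfolding omega_def q using p
      by (simp add: field_simps)
  qed
  have "1 / (1 + exp (2*y)) \<le> exp (- l * y)"
  proof (cases "y \<le> 0")
    case True
    have "1 / (1 + exp (2*y)) \<le> 1" by (simp add: add_pos_pos)
    also have "1 \<le> exp (- l * y)" using True assms by (simp add: mult_nonneg_nonpos)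
    finally show ?thesis .
  next
    case False
    have "1 / (1 + exp (2*y)) \<le> 1 / exp (2*y)"
      by (intro divide_left_mono) (auto intro!: mult_pos_pos add_pos_pos)
    also have "\<dots> = exp (-2*y)" by (simp add: exp_minus field_simps)
    also have "\<dots> \<le> exp (- l * y)" using False assms by (simp add: mult_right_mono)
    finally show ?thesis .
  qed
  with e show ?thesis by linarith
qed

lemma gauss_shift:
  fixes m thstar :: "'a::euclidean_space"
  shows "iso_gaussian_density m sg x = iso_gaussian_density thstar sg ((thstar - m) + x)"
  unfolding iso_gaussian_density_def by (simp add: algebra_simps)

lemma gauss_tilt:
  fixes thstar theta x :: "'a::euclidean_space" assumes "sg > 0"
  shows "exp (- l * (inner theta x / sg\<^sup>2)) * iso_gaussian_density thstar sg x =
    exp (- l * (inner theta thstar / sg\<^sup>2) + l\<^sup>2 * (norm theta)\<^sup>2 / (2 * sg\<^sup>2))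
      * iso_gaussian_density (thstar - l *\<^sub>R theta) sg x"
proof -
  have n: "(norm (x - (thstar - l *\<^sub>R theta)))\<^sup>2 = (norm (x - thstar))\<^sup>2 + 2*l*inner (x - thstar) theta + l\<^sup>2*(norm theta)\<^sup>2"
  proof -
    have e1: "x - (thstar - l *\<^sub>R theta) = (x - thstar) + l *\<^sub>R theta" by simp
    have e2: "(norm (u + l *\<^sub>R theta))\<^sup>2 = (norm u)\<^sup>2 + 2*l*inner u theta + l\<^sup>2*(norm theta)\<^sup>2" for u :: 'a
      unfolding power2_norm_eq_inner by (simp add: inner_add_left inner_add_right inner_commute power2_eq_square algebra_simps)
    show ?thesis unfolding e1 by (rule e2)
  qed
  have eqn: "- l * (inner theta x / sg\<^sup>2) + - (norm (x - thstar))\<^sup>2 / (2 * sg\<^sup>2) =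
     - l * (inner theta thstar / sg\<^sup>2) + l\<^sup>2 * (norm theta)\<^sup>2 / (2 * sg\<^sup>2) + - (norm (x - (thstar - l *\<^sub>R theta)))\<^sup>2 / (2 * sg\<^sup>2)"
    unfolding n using assms by (simp add: field_simps inner_simps inner_commute power2_eq_square)
  have X: "exp (- l * (inner theta x / sg\<^sup>2)) * exp (- (norm (x - thstar))\<^sup>2 / (2 * sg\<^sup>2)) =
    exp (- l * (inner theta thstar / sg\<^sup>2) + l\<^sup>2 * (norm theta)\<^sup>2 / (2 * sg\<^sup>2))
      * exp (- (norm (x - (thstar - l *\<^sub>R theta)))\<^sup>2 / (2 * sg\<^sup>2))"
    by (simp only: mult_exp_exp eqn)
  show ?thesis unfolding iso_gaussian_density_def by (metis X times_divide_eq_right)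
qed

lemma aux_lin: "(C::real) \<le> B \<Longrightarrow> 0 < C \<Longrightarrow> - B / 2 < - (C/5)" by linarith

lemma omega_01: "0 \<le> omega y" "omega y \<le> 1"
  unfolding omega_def by (auto simp: add_pos_pos)

lemma gauss_nonneg: "0 \<le> iso_gaussian_density m sg x"
  unfolding iso_gaussian_density_def by simp

lemma gauss_meas[measurable]: "iso_gaussian_density m sg \<in> borel_measurable (borel :: 'a::euclidean_space measure)"
  unfolding iso_gaussian_density_def by measurable

lemma omega_meas[measurable]: "omega \<in> borel_measurable borel"
  unfolding omega_def by measurable

theorem mainTheorem13:
  fixes thstar theta :: "'a::euclidean_space"
    and sg a r :: real
    and M :: "'b measure" and X :: "'b \<Rightarrow> 'a"
  assumes "sg > 0" and "thstar \<noteq> 0"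
    and "0 < a" and "a < 1" and "r \<ge> 1"
    and "theta \<in> region_D a r thstar"
    and "prob_space M"
    and "distributed M lborel X (\<lambda>x. ennreal (iso_gaussian_density thstar sg x))"
  shows "prob_space.expectation M (\<lambda>w. omega (inner theta (X w) / sg\<^sup>2))
           > 1 - exp (- ((a * (norm thstar / sg) / r)\<^sup>2) / 5)"
proof -
  note D = assms(8)
  interpret P: prob_space M by (rule assms(7))
  define g where "g = iso_gaussian_density thstar sg"
  have gmeas[measurable]: "g \<in> borel_measurable lborel" unfolding g_def by simp
  have nn: "(\<integral>\<^sup>+x. ennreal (g x) * 1 \<partial>lborel) = (\<integral>\<^sup>+w. 1 \<partial>M)"
    unfolding g_def by (rule distributed_nn_integral[OF D]) simp
  then have nn1: "(\<integral>\<^sup>+x. ennreal (g x) \<partial>lborel) = ennreal 1"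
    by (simp add: P.emeasure_space_1)
  have gint: "integrable lborel g"
    by (rule integrableI_nn_integral_finite[OF gmeas _ nn1]) (simp add: g_def gauss_nonneg)
  have "(\<integral>x. g x * 1 \<partial>lborel) = (\<integral>w. 1 \<partial>M)"
    unfolding g_def by (rule distributed_integral[OF D]) (auto simp: gauss_nonneg)
  then have gint1: "(\<integral>x. g x \<partial>lborel) = 1" by (simp add: P.prob_space)
  have shift: "integrable lborel (\<lambda>x. g (b + x)) \<and> (\<integral>x. g (b + x) \<partial>lborel) = 1" for b
  proof -
    have "integrable (distr lborel borel ((+) b)) g" using gint by (simp add: lborel_distr_plus)
    then have "integrable lborel (\<lambda>x. g (b + x))" by (rule integrable_distr[rotated]) simp
    moreover have "(\<integral>x. g (b + x) \<partial>lborel) = (\<integral>x. g x \<partial>distr lborel borel ((+) b))"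
      by (subst integral_distr) auto
    ultimately show ?thesis using gint1 by (simp add: lborel_distr_plus)
  qed
  have Gm: "integrable lborel (iso_gaussian_density m sg) \<and> integral\<^sup>L lborel (iso_gaussian_density m sg) = 1" for m :: 'a
    using shift[of "thstar - m"] unfolding g_def gauss_shift[of m sg _ thstar] by simp
  define mu where "mu = inner theta thstar / sg\<^sup>2"
  define v2 where "v2 = (norm theta)\<^sup>2 / sg\<^sup>2"
  define s where "s = norm thstar / sg"
  define t where "t = a * s / r"
  define l where "l = (if mu \<le> 2 * v2 then mu / v2 else 2)"
  define K where "K = exp (- l * mu + l\<^sup>2 * v2 / 2)"
  have H: "inner theta thstar \<ge> a * (norm thstar)\<^sup>2" and B: "norm theta \<le> r * norm thstar"
    using assms(6) by (auto simp: region_D_def halfspace_H_def ball_B_def)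
  have spos: "s > 0" using assms(1,2) by (simp add: s_def)
  have tpos: "t > 0" using spos assms(3,5) by (simp add: t_def)
  have mu_ge: "mu \<ge> a * s\<^sup>2" using H assms(1) by (simp add: mu_def s_def power_divide divide_right_mono)
  have mupos: "mu > 0" using mu_ge spos assms(3) by (smt (verit) mult_pos_pos zero_less_power)
  have thnz: "theta \<noteq> 0" using mupos by (auto simp: mu_def)
  have v2pos: "v2 > 0" using thnz assms(1) by (simp add: v2_def)
  have v2_le: "v2 \<le> r\<^sup>2 * s\<^sup>2"
  proof -
    have "(norm theta)\<^sup>2 \<le> (r * norm thstar)\<^sup>2" using B by (simp add: power_mono)
    then show ?thesis using assms(1) by (simp add: v2_def s_def power_divide power_mult_distrib divide_right_mono)
  qed
  have l01: "0 \<le> l" "l \<le> 2" using mupos v2pos by (auto simp: l_def field_simps)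
  have t2: "t\<^sup>2 = a\<^sup>2 * s\<^sup>2 / r\<^sup>2" by (simp add: t_def power_divide power_mult_distrib)
  have Kbound: "- l * mu + l\<^sup>2 * v2 / 2 < - (t\<^sup>2 / 5)"
  proof (cases "mu \<le> 2 * v2")
    case True
    then have k1: "- l * mu + l\<^sup>2 * v2 / 2 = - (mu\<^sup>2 / v2) / 2"
      using v2pos by (simp add: l_def field_simps power2_eq_square)
    have k2: "t\<^sup>2 \<le> mu\<^sup>2 / v2"
    proof -
      have "(a * s\<^sup>2)\<^sup>2 \<le> mu\<^sup>2" using mu_ge spos assms(3) by (intro power_mono) auto
      then have "a\<^sup>2 * s\<^sup>2 * s\<^sup>2 \<le> mu\<^sup>2" by (simp add: power_mult_distrib power2_eq_square mult_ac)
      moreover have "r\<^sup>2 * s\<^sup>2 * (mu\<^sup>2 / v2) \<ge> v2 * (mu\<^sup>2 / v2)"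
        using v2_le v2pos by (intro mult_right_mono) auto
      ultimately have "a\<^sup>2 * s\<^sup>2 * s\<^sup>2 \<le> r\<^sup>2 * s\<^sup>2 * (mu\<^sup>2 / v2)" using v2pos by simp
      then have "(a\<^sup>2 * s\<^sup>2) * s\<^sup>2 \<le> (r\<^sup>2 * (mu\<^sup>2 / v2)) * s\<^sup>2" by (simp add: mult_ac)
      then have "a\<^sup>2 * s\<^sup>2 \<le> r\<^sup>2 * (mu\<^sup>2 / v2)"
        using mult_right_le_imp_le spos by (metis zero_less_power)
      then show ?thesis unfolding t2 using assms(5) by (simp add: divide_le_eq mult_ac)
    qed
    have k3: "t\<^sup>2 > 0" using tpos by simp
    have "- (mu\<^sup>2 / v2) / 2 < - (t\<^sup>2 / 5)" using k2 k3 aux_lin by blast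
    then show ?thesis unfolding k1 .
  next
    case False
    then have "- l * mu + l\<^sup>2 * v2 / 2 = - 2 * mu + 2 * v2" by (simp add: l_def)
    moreover have "t\<^sup>2 \<le> a * s\<^sup>2"
    proof -
      have "a / r\<^sup>2 \<le> 1" using assms(3,4,5) by (smt (verit) le_divide_eq_1 one_le_power)
      then have "a * (a / r\<^sup>2) * s\<^sup>2 \<le> a * 1 * s\<^sup>2" using assms(3)
        by (intro mult_right_mono mult_left_mono) auto
      then show ?thesis unfolding t2 by (simp add: power2_eq_square)
    qed
    moreover have "t\<^sup>2 > 0" using tpos by simp
    ultimately show ?thesis using False mu_ge by linarith
  qed
  define m where "m = thstar - l *\<^sub>R theta"
  have tilt: "g x * (1 - exp (- l * (inner theta x / sg\<^sup>2))) = g x - K * iso_gaussian_density m sg x" for x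
    using gauss_tilt[OF assms(1), of l theta x thstar]
    by (simp add: g_def K_def m_def mu_def v2_def algebra_simps power_divide)
  have int1: "integrable lborel (\<lambda>x. g x * (1 - exp (- l * (inner theta x / sg\<^sup>2))))"
    unfolding tilt using gint Gm[of m] by auto
  have int2: "integrable lborel (\<lambda>x. g x * omega (inner theta x / sg\<^sup>2))"
  proof (rule Bochner_Integration.integrable_bound[OF gint])
    show "(\<lambda>x. g x * omega (inner theta x / sg\<^sup>2)) \<in> borel_measurable lborel" by measurable
    show "AE x in lborel. norm (g x * omega (inner theta x / sg\<^sup>2)) \<le> norm (g x)"
      using omega_01 by (auto intro!: mult_left_le simp: g_def gauss_nonneg abs_mult)
  qed
  have "1 - K = (\<integral>x. g x * (1 - exp (- l * (inner theta x / sg\<^sup>2))) \<partial>lborel)"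
    unfolding tilt using gint Gm[of m] gint1 by simp
  also have "\<dots> \<le> (\<integral>x. g x * omega (inner theta x / sg\<^sup>2) \<partial>lborel)"
    by (intro integral_mono int1 int2 mult_left_mono omega_lb l01) (simp add: g_def gauss_nonneg)
  also have "\<dots> = prob_space.expectation M (\<lambda>w. omega (inner theta (X w) / sg\<^sup>2))"
    unfolding g_def by (rule distributed_integral[OF D]) (auto simp: gauss_nonneg)
  finally have E: "1 - K \<le> prob_space.expectation M (\<lambda>w. omega (inner theta (X w) / sg\<^sup>2))" .
  have "K < exp (- (t\<^sup>2 / 5))" unfolding K_def using Kbound by simp
  moreover have "(a * (norm thstar / sg) / r)\<^sup>2 = t\<^sup>2" by (simp add: t_def s_def)
  ultimately show ?thesis using E by simp
qed

end
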